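(* Let $G=K(n_1,\dots,n_s)$ be a complete $s$-partite graph ($s\ge 2$) with parts $V_1,\dots,V_s$, $|V_j|=n_j$. Let $j\in\{1,\dots,s\}$ with $n_j\ge 2$. Then there is an optimal $1$-relaxed coloring $f$ of $G$ (one using $\chi_1(G)$ colors) such that all vertices of $V_j$ receive the same color, i.e. $|f(V_j)|=1$.
   Context: A map $f$ from $V(G)$ to a finite set of colors is a $t$-relaxed coloring if every vertex $u$ has at most $t$ neighbors $v$ with $f(v)=f(u)$; $\chi_t(G)$ is the minimum number of colors in a $t$-relaxed coloring of $G$, and a $t$-relaxed coloring using $\chi_t(G)$ colors is called optimal. $f(S)$ denotes the set of colors used on $S$. *)

theory Defs
  imports Main
begin

text \<open>A graph is given by a vertex set V and a symmetric irreflexive adjacency relation E.\<close>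

definition relaxed_coloring :: "nat \<Rightarrow> 'a set \<Rightarrow> ('a \<Rightarrow> 'a \<Rightarrow> bool) \<Rightarrow> ('a \<Rightarrow> 'c) \<Rightarrow> bool" where
  "relaxed_coloring t V E f \<longleftrightarrow>
     finite (f ` V) \<and> (\<forall>u\<in>V. card {v\<in>V. E u v \<and> f v = f u} \<le> t)"

definition relaxed_chromatic :: "nat \<Rightarrow> 'a set \<Rightarrow> ('a \<Rightarrow> 'a \<Rightarrow> bool) \<Rightarrow> nat" where
  "relaxed_chromatic t V E =
     (LEAST k. \<exists>f :: 'a \<Rightarrow> nat. relaxed_coloring t V E f \<and> card (f ` V) = k)"

text \<open>Complete s-partite graph K(n_1,...,n_s): vertices (i,k) with 1 <= i <= s, k < n i;
  part V_i = {(i,k). k < n i}; two vertices are adjacent iff they lie in different parts.\<close>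

definition mp_vertices :: "nat \<Rightarrow> (nat \<Rightarrow> nat) \<Rightarrow> (nat \<times> nat) set" where
  "mp_vertices s n = {(i, k). 1 \<le> i \<and> i \<le> s \<and> k < n i}"

definition mp_part :: "(nat \<Rightarrow> nat) \<Rightarrow> nat \<Rightarrow> (nat \<times> nat) set" where
  "mp_part n i = {(i, k) | k. k < n i}"

definition mp_adj :: "nat \<times> nat \<Rightarrow> nat \<times> nat \<Rightarrow> bool" where
  "mp_adj u v \<longleftrightarrow> fst u \<noteq> fst v"

end

theory Submission
  imports Defs "HOL-Library.Nat_Bijection"
begin

lemma card_le1_iff: "finite A \<Longrightarrow> card A \<le> 1 \<longleftrightarrow> (\<forall>a\<in>A. \<forall>b\<in>A. a = b)"
  using card_le_Suc0_iff_eq by auto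

lemma card_le1_D: "finite A \<Longrightarrow> card A \<le> 1 \<Longrightarrow> a \<in> A \<Longrightarrow> b \<in> A \<Longrightarrow> a = b"
  using card_le1_iff by blast

theorem lemma4p1:
  fixes s :: nat and n :: "nat \<Rightarrow> nat" and j :: nat
  assumes "s \<ge> 2"
    and "\<forall>i. 1 \<le> i \<and> i \<le> s \<longrightarrow> n i \<ge> 1"
    and "1 \<le> j" and "j \<le> s" and "n j \<ge> 2"
  shows "\<exists>f :: nat \<times> nat \<Rightarrow> nat.
           relaxed_coloring 1 (mp_vertices s n) mp_adj f
         \<and> card (f ` mp_vertices s n) = relaxed_chromatic 1 (mp_vertices s n) mp_adj
         \<and> card (f ` mp_part n j) = 1"
proof -
  define V where "V = mp_vertices s n"
  define P where "P = mp_part n j"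
  have VS: "V = Sigma {1..s} (\<lambda>i. {..<n i})" unfolding V_def mp_vertices_def by auto
  have finV: "finite V" unfolding VS by auto
  have PV: "P \<subseteq> V" using assms unfolding P_def V_def mp_part_def mp_vertices_def by auto
  have inP: "\<And>v. v \<in> P \<longleftrightarrow> v \<in> V \<and> fst v = j" using assms
    unfolding P_def V_def mp_part_def mp_vertices_def by auto
  have x1: "(j,0) \<in> V" and x2: "(j,1) \<in> V" using assms unfolding V_def mp_vertices_def by auto
  have ex: "\<exists>f :: nat \<times> nat \<Rightarrow> nat. relaxed_coloring 1 V mp_adj f \<and> card (f ` V) = card (prod_encode ` V)"
  proof (intro exI conjI)
    show "relaxed_coloring 1 V mp_adj prod_encode"
      unfolding relaxed_coloring_def
    proof (intro conjI ballI)
      show "finite (prod_encode ` V)" using finV by simp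
      fix u assume "u \<in> V"
      have inj: "\<And>v. prod_encode v = prod_encode u \<Longrightarrow> v = u"
        by (metis inj_prod_encode inj_eq)
      have "{v\<in>V. mp_adj u v \<and> prod_encode v = prod_encode u} = {}"
        using inj by (auto simp: mp_adj_def)
      then show "card {v\<in>V. mp_adj u v \<and> prod_encode v = prod_encode u} \<le> 1" by (metis card.empty le0)
    qed
  qed simp
  then have "\<exists>k f. (relaxed_coloring 1 V mp_adj (f :: nat \<times> nat \<Rightarrow> nat) \<and> card (f ` V) = k)" by blast
  from LeastI_ex[OF this] obtain f :: "nat \<times> nat \<Rightarrow> nat" where
    fcx: "relaxed_coloring 1 V mp_adj f \<and> card (f ` V) = (LEAST k. \<exists>f :: nat \<times> nat \<Rightarrow> nat. relaxed_coloring 1 V mp_adj f \<and> card (f ` V) = k)"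
    ..
  note fc = conjunct1[OF fcx] and fcard0 = conjunct2[OF fcx]
  have fcard: "card (f ` V) = relaxed_chromatic 1 V mp_adj"
    unfolding relaxed_chromatic_def by (rule fcard0)
  have F: "\<And>x a b. x \<in> V \<Longrightarrow> a \<in> V \<Longrightarrow> b \<in> V \<Longrightarrow> fst x \<noteq> fst a \<Longrightarrow> fst x \<noteq> fst b
      \<Longrightarrow> f a = f x \<Longrightarrow> f b = f x \<Longrightarrow> a = b"
  proof -
    fix x a b assume h: "x \<in> V" "a \<in> V" "b \<in> V" "fst x \<noteq> fst a" "fst x \<noteq> fst b" "f a = f x" "f b = f x"
    have "card {v\<in>V. mp_adj x v \<and> f v = f x} \<le> 1" using fc h(1) unfolding relaxed_coloring_def by blast
    moreover have "finite {v\<in>V. mp_adj x v \<and> f v = f x}" using finV by simp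
    moreover have "a \<in> {v\<in>V. mp_adj x v \<and> f v = f x}" using h by (simp add: mp_adj_def)
    moreover have "b \<in> {v\<in>V. mp_adj x v \<and> f v = f x}" using h by (simp add: mp_adj_def)
    ultimately show "a = b" by (intro card_le1_D[of "{v\<in>V. mp_adj x v \<and> f v = f x}"])
  qed
  define c1 where "c1 = f (j,0)"
  define c2 where "c2 = f (j,1)"
  define g where "g v = (if fst v = j then c1 else if f v = c1 then c2 else f v)" for v
  have G: "\<And>u a b. u \<in> V \<Longrightarrow> a \<in> V \<Longrightarrow> b \<in> V \<Longrightarrow> fst u \<noteq> fst a \<Longrightarrow> fst u \<noteq> fst b
      \<Longrightarrow> g a = g u \<Longrightarrow> g b = g u \<Longrightarrow> a = b"
  proof -
    fix u a b assume h: "u \<in> V" "a \<in> V" "b \<in> V" "fst u \<noteq> fst a" "fst u \<noteq> fst b" "g a = g u" "g b = g u"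
    have A: "\<And>w w'. w \<in> V \<Longrightarrow> w' \<in> V \<Longrightarrow> fst w \<noteq> j \<Longrightarrow> fst w' \<noteq> j \<Longrightarrow> f w = c1 \<Longrightarrow> f w' = c1 \<Longrightarrow> w = w'"
      using F[OF x1] unfolding c1_def by auto
    have B: "\<And>w w'. w \<in> V \<Longrightarrow> w' \<in> V \<Longrightarrow> fst w \<noteq> j \<Longrightarrow> fst w' \<noteq> j \<Longrightarrow> f w = c2 \<Longrightarrow> f w' = c2 \<Longrightarrow> w = w'"
      using F[OF x2] unfolding c2_def by auto
    have C: "\<And>w. w \<in> V \<Longrightarrow> fst w \<noteq> j \<Longrightarrow> f w = c1 \<Longrightarrow> c1 \<noteq> c2"
      using F[OF _ x1 x2] unfolding c1_def c2_def by fastforce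
    show "a = b"
    proof (cases "fst u = j")
      case True
      have "\<And>w. w \<in> V \<Longrightarrow> fst u \<noteq> fst w \<Longrightarrow> g w = g u \<Longrightarrow> False"
      proof -
        fix w assume w: "w \<in> V" "fst u \<noteq> fst w" "g w = g u"
        then have "fst w \<noteq> j" using True by simp
        moreover have "g u = c1" using True g_def by simp
        ultimately have "f w = c1" "c1 = c2" using w(3) unfolding g_def by (auto split: if_splits)
        then show False using C[OF w(1) \<open>fst w \<noteq> j\<close>] by simp
      qed
      then show ?thesis using h by blast
    next
      case u: False
      show ?thesis
      proof (cases "f u = c1")
        case True
        have ne: "c1 \<noteq> c2" using C[OF h(1) u True] .
        have gu: "g u = c2" using u True g_def by simp
        have K: "fst w \<noteq> j \<and> f w = c2" if w: "w \<in> V" "fst u \<noteq> fst w" "g w = g u" for w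
        proof -
          have wj: "fst w \<noteq> j" using w(3) gu ne unfolding g_def by (auto split: if_splits)
          have "f w \<noteq> c1" using A[OF w(1) h(1) wj u _ True] w(2) by auto
          then show ?thesis using wj w(3) gu unfolding g_def by auto
        qed
        show ?thesis using K[OF h(2) h(4) h(6)] K[OF h(3) h(5) h(7)] B h(2,3) by blast
      next
        case False
        have gu: "g u = f u" using u False g_def by simp
        have K: "fst w \<noteq> j \<and> ((f w = c1 \<and> f u = c2) \<or> f w = f u)" if w: "w \<in> V" "fst u \<noteq> fst w" "g w = g u" for w
        proof -
          have wj: "fst w \<noteq> j" using w(3) gu False unfolding g_def by (auto split: if_splits)
          then show ?thesis using w(3) gu unfolding g_def by (auto split: if_splits)
        qed
        note Ka = K[OF h(2) h(4) h(6)] and Kb = K[OF h(3) h(5) h(7)]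
        show ?thesis
        proof (cases "f a = c1")
          case fa: True
          show ?thesis
          proof (cases "f b = c1")
            case True
            then show ?thesis using A[OF h(2) h(3)] Ka Kb fa by blast
          next
            case fb: False
            then have "f b = c2" "f u = c2" using Ka Kb fa by auto
            then have "u = b" using B[OF h(1) h(3) u] Kb by blast
            then show ?thesis using h(5) by simp
          qed
        next
          case fa: False
          show ?thesis
          proof (cases "f b = c1")
            case fb: True
            then have "f a = c2" "f u = c2" using Ka Kb fa by auto
            then have "u = a" using B[OF h(1) h(2) u] Ka by blast
            then show ?thesis using h(4) by simp
          next
            case fb: False
            then have "f a = f u" "f b = f u" using Ka Kb fa by auto
            then show ?thesis using F[OF h(1-5)] by blast
          qed
        qed
      qed
    qed
  qed
  have gsub: "g ` V \<subseteq> f ` V" using x1 x2 unfolding g_def c1_def c2_def by auto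
  have gc: "relaxed_coloring 1 V mp_adj g"
    unfolding relaxed_coloring_def
  proof (intro conjI ballI)
    show "finite (g ` V)" using finV by simp
    fix u assume u: "u \<in> V"
    have fin: "finite {v\<in>V. mp_adj u v \<and> g v = g u}" using finV by simp
    have "\<forall>a\<in>{v\<in>V. mp_adj u v \<and> g v = g u}. \<forall>b\<in>{v\<in>V. mp_adj u v \<and> g v = g u}. a = b"
    proof (intro ballI)
      fix a b assume "a \<in> {v\<in>V. mp_adj u v \<and> g v = g u}" "b \<in> {v\<in>V. mp_adj u v \<and> g v = g u}"
      then show "a = b" using G[OF u, of a b] by (simp add: mp_adj_def)
    qed
    then show "card {v\<in>V. mp_adj u v \<and> g v = g u} \<le> 1"
      using card_le1_iff[OF fin] by blast
  qed
  have le1: "card (g ` V) \<le> card (f ` V)" using gsub finV by (simp add: card_mono)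
  have le2: "relaxed_chromatic 1 V mp_adj \<le> card (g ` V)"
    unfolding relaxed_chromatic_def by (rule Least_le) (use gc in blast)
  have "g ` P = {c1}"
  proof -
    have "(j,0) \<in> P" using x1 inP by auto
    moreover have "\<forall>v\<in>P. g v = c1" using inP unfolding g_def by auto
    ultimately show ?thesis by auto
  qed
  then have "card (g ` P) = 1" by simp
  then show ?thesis using gc le1 le2 fcard unfolding V_def P_def by (intro exI[of _ g] conjI) (simp_all only: le_antisym)
qed

end
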